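(* Consider a stochastic $K$-armed bandit ($K\ge2$): at each round $t$ a reward vector $\mathbf R_t\in[-R_{\max},R_{\max}]^K$ is drawn i.i.d. from a fixed distribution with mean $\mathbf r$, where $r(a)\ne r(a')$ for $a\neq a'$; let $\Delta=\min_{a\ne a'}|r(a)-r(a')|$. Let $\eta>0$, $\alpha>0$, and run LB-SGB: starting from $\boldsymbol\theta_1=\mathbf 0$, at round $t$ sample $a_t\sim\pi_{\boldsymbol\theta_t}$ (softmax policy), observe $R_t(a_t)$, form $\hat r_t(a)=\mathbb I\{a_t=a\}R_t(a_t)/\pi_{\boldsymbol\theta_t}(a)$ and the stochastic gradient $$\widehat\nabla\Phi_\eta(\boldsymbol\theta_t)=(\mathrm{diag}(\pi_{\boldsymbol\theta_t})-\pi_{\boldsymbol\theta_t}\pi_{\boldsymbol\theta_t}^\top)\hat{\mathbf r}_t+\frac1\eta(\mathbf 1-K\pi_{\boldsymbol\theta_t}),$$ and update $\boldsymbol\theta_{t+1}=\boldsymbol\theta_t+\alpha\widehat\nabla\Phi_\eta(\boldsymbol\theta_t)$. Let $\Phi_\eta(\boldsymbol\theta)=\pi_{\boldsymbol\theta}^\top\mathbf r+\frac1\eta\sum_a\log\pi_{\boldsymbol\theta}(a)$. Then for all $t\ge1$, $$\mathbb E_t\big[\|\widehat\nabla\Phi_\eta(\boldsymbol\theta_t)\|_2^2\big]\le\frac{16R_{\max}^3K^{3/2}}{\Delta^2}\|\nabla\Phi_\eta(\boldsymbol\theta_t)\|_2+b(\eta),\qquad b(\eta)=\frac{2K}{\eta}\Big(\frac{4K}{\eta}+\frac{16R_{\max}^3K^{3/2}}{\Delta^2}\Big),$$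 where $\mathbb E_t$ is the expectation over the round-$t$ randomness ($a_t$ and $\mathbf R_t$) conditional on the past.
   Context: Softmax policy: $\pi_{\boldsymbol\theta}(a)=e^{\theta(a)}/\sum_b e^{\theta(b)}$. $\mathbf 1$ is the all-ones vector. *)

theory Defs
  imports "HOL-Probability.Probability"
begin

text \<open>Arms are the elements of a finite type 'k; K = CARD('k).
  Parameter vectors and reward vectors live in real^'k (Euclidean norm).\<close>

definition softmax :: "real^'k::finite \<Rightarrow> real^'k" where
  "softmax \<theta> = (\<chi> a. exp (\<theta> $ a) / (\<Sum>b\<in>UNIV. exp (\<theta> $ b)))"

definition Phi :: "real \<Rightarrow> real^'k::finite \<Rightarrow> real^'k \<Rightarrow> real" where
  "Phi \<eta> r \<theta> = softmax \<theta> \<bullet> r + (1/\<eta>) * (\<Sum>a\<in>UNIV. ln (softmax \<theta> $ a))"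

definition rhat :: "real^'k::finite \<Rightarrow> 'k \<Rightarrow> real^'k \<Rightarrow> real^'k" where
  "rhat \<theta> a0 Rv = (\<chi> a. (if a0 = a then Rv $ a0 else 0) / softmax \<theta> $ a)"

definition est_grad :: "real \<Rightarrow> real^'k::finite \<Rightarrow> 'k \<Rightarrow> real^'k \<Rightarrow> real^'k" where
  "est_grad \<eta> \<theta> a0 Rv =
     (let p = softmax \<theta>; x = rhat \<theta> a0 Rv in
      (\<chi> i. p $ i * x $ i - p $ i * (p \<bullet> x) + (1/\<eta>) * (1 - real CARD('k) * p $ i)))"

definition gap :: "real^'k::finite \<Rightarrow> real" where
  "gap r = Min {\<bar>r $ a - r $ a'\<bar> | a a'. a \<noteq> a'}"

end

theory Submission imports Defs begin

lemma softmax_pos: "softmax \<theta> $ a > 0"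
  unfolding softmax_def by (auto intro!: divide_pos_pos sum_pos)

lemma softmax_sum: "(\<Sum>a\<in>UNIV. softmax \<theta> $ a) = 1"
proof -
  have "(\<Sum>b\<in>UNIV. exp (\<theta> $ b)) > 0" by (auto intro!: sum_pos)
  then show ?thesis unfolding softmax_def by (simp add: sum_divide_distrib[symmetric])
qed

lemma softmax_le1: "softmax \<theta> $ a \<le> 1"
proof -
  have "softmax \<theta> $ a \<le> (\<Sum>a\<in>UNIV. softmax \<theta> $ a)"
    by (rule member_le_sum) (auto simp: less_imp_le softmax_pos)
  then show ?thesis by (simp add: softmax_sum)
qed

lemma grad_formula:
  fixes r \<theta> g :: "real^'k::finite"
  assumes grad: "(Phi \<eta> r has_derivative (\<lambda>h. g \<bullet> h)) (at \<theta>)" and eta: "\<eta> > 0"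
  shows "g $ i = softmax \<theta> $ i * (r $ i - softmax \<theta> \<bullet> r)
              + (1/\<eta>) * (1 - real CARD('k) * softmax \<theta> $ i)"
proof -
  define c where "c = exp (\<theta> $ i)"
  define S0 where "S0 = (\<Sum>b\<in>UNIV. exp (\<theta> $ b))"
  define N0 where "N0 = (\<Sum>b\<in>UNIV. exp (\<theta> $ b) * r $ b)"
  define T0 where "T0 = (\<Sum>b\<in>UNIV. \<theta> $ b)"
  define K where "K = real CARD('k)"
  define f where "f = (\<lambda>t::real. Phi \<eta> r (\<theta> + t *\<^sub>R axis i 1))"
  have cpos: "c > 0" unfolding c_def by simp
  have S0pos: "S0 > 0" unfolding S0_def by (auto intro!: sum_pos)
  have comp: "\<And>t b. (\<theta> + t *\<^sub>R axis i 1) $ b = \<theta> $ b + (if b = i then t else 0)"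
    by (simp add: axis_def)
  have ex: "\<And>t b. exp (\<theta> $ b + (if b = i then t else 0)) = exp (\<theta> $ b) + (if b = i then c * (exp t - 1) else 0)"
    by (auto simp: c_def exp_add algebra_simps)
  have S: "\<And>t. (\<Sum>b\<in>UNIV. exp ((\<theta> + t *\<^sub>R axis i 1) $ b)) = S0 + c * (exp t - 1)"
    unfolding comp ex by (simp add: sum.distrib S0_def)
  have N: "\<And>t. (\<Sum>b\<in>UNIV. exp ((\<theta> + t *\<^sub>R axis i 1) $ b) * r $ b) = N0 + c * r $ i * (exp t - 1)"
  proof -
    fix t
    have "\<And>b. exp ((\<theta> + t *\<^sub>R axis i 1) $ b) * r $ b = exp (\<theta> $ b) * r $ b + (if b = i then c * r $ i * (exp t - 1) else 0)"
      unfolding comp ex by (auto simp: algebra_simps)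
    then show "(\<Sum>b\<in>UNIV. exp ((\<theta> + t *\<^sub>R axis i 1) $ b) * r $ b) = N0 + c * r $ i * (exp t - 1)"
      by (simp add: sum.distrib N0_def)
  qed
  have Spos: "\<And>t. S0 + c * (exp t - 1) > 0"
  proof -
    fix t
    have "S0 + c * (exp t - 1) = (\<Sum>b\<in>UNIV. exp ((\<theta> + t *\<^sub>R axis i 1) $ b))" using S by simp
    also have "\<dots> > 0" by (auto intro!: sum_pos)
    finally show "S0 + c * (exp t - 1) > 0" .
  qed
  have L: "\<And>t. (\<Sum>b\<in>UNIV. (\<theta> + t *\<^sub>R axis i 1) $ b) = T0 + t"
    unfolding comp by (simp add: sum.distrib T0_def)
  have feq: "f t = (N0 + c * r $ i * (exp t - 1)) / (S0 + c * (exp t - 1))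
        + (1/\<eta>) * (T0 + t - K * ln (S0 + c * (exp t - 1)))" for t
  proof -
    let ?v = "\<theta> + t *\<^sub>R axis i 1"
    have sm: "softmax ?v $ a = exp (?v $ a) / (S0 + c * (exp t - 1))" for a
      unfolding softmax_def using S[of t] by simp
    have "softmax ?v \<bullet> r = (\<Sum>a\<in>UNIV. exp (?v $ a) * r $ a) / (S0 + c * (exp t - 1))"
      unfolding inner_vec_def sm by (simp add: sum_divide_distrib)
    also have "\<dots> = (N0 + c * r $ i * (exp t - 1)) / (S0 + c * (exp t - 1))" using N by simp
    finally have 1: "softmax ?v \<bullet> r = \<dots>" .
    have "(\<Sum>a\<in>UNIV. ln (softmax ?v $ a)) = (\<Sum>a\<in>UNIV. ?v $ a - ln (S0 + c * (exp t - 1)))"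
      unfolding sm using Spos[of t] by (simp add: ln_div)
    also have "\<dots> = T0 + t - K * ln (S0 + c * (exp t - 1))"
      unfolding sum_subtractf L by (simp add: K_def)
    finally have 2: "(\<Sum>a\<in>UNIV. ln (softmax ?v $ a)) = \<dots>" .
    show ?thesis unfolding f_def Phi_def 1 2 by simp
  qed
  have D1: "(f has_field_derivative
      ((c * r $ i * S0 - N0 * c) / S0\<^sup>2 + (1/\<eta>) * (1 - K * (c / S0)))) (at 0)"
  proof -
    have "((\<lambda>t. (N0 + c * r $ i * (exp t - 1)) / (S0 + c * (exp t - 1))
        + (1/\<eta>) * (T0 + t - K * ln (S0 + c * (exp t - 1)))) has_field_derivative
      ((c * r $ i * S0 - N0 * c) / S0\<^sup>2 + (1/\<eta>) * (1 - K * (c / S0)))) (at 0)"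
      using S0pos eta by (auto intro!: derivative_eq_intros simp: field_simps power2_eq_square)
    then show ?thesis unfolding feq[abs_def] .
  qed
  have D2: "(f has_field_derivative g $ i) (at 0)"
  proof -
    have lin: "((\<lambda>t::real. \<theta> + t *\<^sub>R axis i 1) has_derivative (\<lambda>t. t *\<^sub>R axis i 1)) (at 0)"
      by (auto intro!: derivative_eq_intros)
    have "((Phi \<eta> r \<circ> (\<lambda>t::real. \<theta> + t *\<^sub>R axis i 1)) has_derivative ((\<lambda>h. g \<bullet> h) \<circ> (\<lambda>t. t *\<^sub>R axis i 1))) (at 0)"
      by (rule diff_chain_at[OF lin]) (simp add: grad)
    moreover have "((\<lambda>h. g \<bullet> h) \<circ> (\<lambda>t. t *\<^sub>R axis i 1)) = (*) (g $ i)"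
      by (auto simp: inner_axis)
    ultimately show ?thesis unfolding has_field_derivative_def f_def o_def by simp
  qed
  have gi: "g $ i = (c * r $ i * S0 - N0 * c) / S0\<^sup>2 + (1/\<eta>) * (1 - K * (c / S0))"
    using DERIV_unique[OF D2 D1] .
  have p1: "softmax \<theta> $ i = c / S0" unfolding softmax_def c_def S0_def by simp
  have p2: "softmax \<theta> \<bullet> r = N0 / S0"
    unfolding softmax_def N0_def S0_def inner_vec_def by (simp add: sum_divide_distrib)
  show ?thesis unfolding gi p1 p2 K_def[symmetric] using S0pos eta
    by (simp add: field_simps power2_eq_square)
qed

lemma sumsq_le1: "(\<Sum>i\<in>UNIV. (softmax \<theta> $ i)\<^sup>2) \<le> 1"
proof -
  have "(\<Sum>i\<in>UNIV. (softmax \<theta> $ i)\<^sup>2) \<le> (\<Sum>i\<in>UNIV. softmax \<theta> $ i)"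
    by (rule sum_mono) (simp add: power2_eq_square mult_le_cancel_right1 softmax_le1 softmax_pos less_imp_le)
  then show ?thesis by (simp add: softmax_sum)
qed

lemma vnorm:
  fixes \<theta> :: "real^'k::finite"
  assumes eta: "\<eta> > 0"
  shows "(\<Sum>i\<in>UNIV. ((1/\<eta>) * (1 - real CARD('k) * softmax \<theta> $ i))\<^sup>2) \<le> (real CARD('k))\<^sup>2 / \<eta>\<^sup>2"
proof -
  define K where "K = real CARD('k)"
  let ?p = "softmax \<theta>"
  have "(\<Sum>i\<in>UNIV. ((1/\<eta>) * (1 - K * ?p $ i))\<^sup>2)
      = (1/\<eta>\<^sup>2) * (\<Sum>i\<in>UNIV. 1 - 2 * K * ?p $ i + K\<^sup>2 * (?p $ i)\<^sup>2)"
    by (simp add: sum_distrib_left power2_eq_square algebra_simps)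
  also have "(\<Sum>i\<in>UNIV. 1 - 2 * K * ?p $ i + K\<^sup>2 * (?p $ i)\<^sup>2)
      = K - 2 * K * (\<Sum>i\<in>UNIV. ?p $ i) + K\<^sup>2 * (\<Sum>i\<in>UNIV. (?p $ i)\<^sup>2)"
    by (simp add: sum.distrib sum_subtractf sum_distrib_left K_def)
  also have "\<dots> \<le> K\<^sup>2"
  proof -
    have "K\<^sup>2 * (\<Sum>i\<in>UNIV. (?p $ i)\<^sup>2) \<le> K\<^sup>2"
      using sumsq_le1[of \<theta>] by (simp add: mult_left_le)
    moreover have "K \<ge> 0" by (simp add: K_def)
    ultimately show ?thesis using softmax_sum[of \<theta>] by simp
  qed
  finally show ?thesis using eta unfolding K_def
    by (simp add: divide_right_mono)
qed

lemma sq2: "(x+y)^2 \<le> 2*x^2 + 2*(y::real)^2"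
proof -
  have "0 \<le> (x-y)^2" by simp
  thus ?thesis by (simp add: power2_eq_square algebra_simps)
qed

lemma est_comp:
  fixes \<theta> :: "real^'k::finite"
  shows "est_grad \<eta> \<theta> a Rv $ i = Rv $ a * ((if i = a then 1 else 0) - softmax \<theta> $ i)
     + (1/\<eta>) * (1 - real CARD('k) * softmax \<theta> $ i)"
proof -
  let ?p = "softmax \<theta>"
  have px: "?p \<bullet> rhat \<theta> a Rv = Rv $ a"
  proof -
    have "\<And>i. ?p $ i * ((if a = i then Rv $ a else 0) / ?p $ i) = (if i = a then Rv $ a else 0)"
      using softmax_pos[of \<theta>] by (auto simp: less_imp_neq[symmetric])
    then show ?thesis unfolding inner_vec_def rhat_def by simp
  qed
  show ?thesis unfolding est_grad_def Let_def px using softmax_pos[of \<theta> i]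
    by (auto simp: rhat_def algebra_simps)
qed

lemma est_bound:
  fixes \<theta> :: "real^'k::finite"
  assumes bd: "\<forall>a. \<bar>Rv $ a\<bar> \<le> Rmax" and eta: "\<eta> > 0"
  shows "(\<Sum>a\<in>UNIV. softmax \<theta> $ a * (norm (est_grad \<eta> \<theta> a Rv))\<^sup>2)
     \<le> 8 * Rmax\<^sup>2 * (1 - softmax \<theta> $ j) + 2 * (real CARD('k))\<^sup>2 / \<eta>\<^sup>2"
proof -
  let ?p = "softmax \<theta>"
  define v where "v i = (1/\<eta>) * (1 - real CARD('k) * ?p $ i)" for i
  define V where "V = (\<Sum>i\<in>UNIV. (v i)\<^sup>2)"
  have V: "V \<le> (real CARD('k))\<^sup>2 / \<eta>\<^sup>2" unfolding V_def v_def by (rule vnorm[OF eta])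
  have each: "(norm (est_grad \<eta> \<theta> a Rv))\<^sup>2 \<le> 4 * Rmax\<^sup>2 * (1 - ?p $ a) + 2 * V" for a
  proof -
    let ?u = "\<lambda>i. (if i = a then 1 else 0) - ?p $ i"
    have "(norm (est_grad \<eta> \<theta> a Rv))\<^sup>2 = (\<Sum>i\<in>UNIV. (Rv $ a * ?u i + v i)\<^sup>2)"
      unfolding power2_norm_eq_inner inner_vec_def est_comp v_def by (simp add: power2_eq_square)
    also have "\<dots> \<le> (\<Sum>i\<in>UNIV. 2 * Rmax\<^sup>2 * (?u i)\<^sup>2 + 2 * (v i)\<^sup>2)"
    proof (rule sum_mono)
      fix i
      have "(Rv $ a * ?u i + v i)\<^sup>2 \<le> 2 * (Rv $ a * ?u i)\<^sup>2 + 2 * (v i)\<^sup>2"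
        by (rule sq2)
      moreover have "(Rv $ a)\<^sup>2 \<le> Rmax\<^sup>2" 
      proof -
        have "\<bar>Rv $ a\<bar>\<^sup>2 \<le> Rmax\<^sup>2" using bd by (intro power_mono) auto
        then show ?thesis by simp
      qed
      then have "(Rv $ a * ?u i)\<^sup>2 \<le> Rmax\<^sup>2 * (?u i)\<^sup>2"
        by (simp add: power_mult_distrib mult_right_mono)
      ultimately show "(Rv $ a * ?u i + v i)\<^sup>2 \<le> 2 * Rmax\<^sup>2 * (?u i)\<^sup>2 + 2 * (v i)\<^sup>2" by linarith
    qed
    also have "\<dots> = 2 * Rmax\<^sup>2 * (\<Sum>i\<in>UNIV. (?u i)\<^sup>2) + 2 * V"
      by (simp add: sum.distrib sum_distrib_left V_def)
    also have "(\<Sum>i\<in>UNIV. (?u i)\<^sup>2) = (\<Sum>i\<in>UNIV. (?p $ i)\<^sup>2 + (if i = a then 1 - 2 * ?p $ a else 0))"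
      by (rule sum.cong) (auto simp: power2_eq_square algebra_simps)
    also have "\<dots> = (\<Sum>i\<in>UNIV. (?p $ i)\<^sup>2) + (1 - 2 * ?p $ a)"
      by (simp add: sum.distrib)
    also have "\<dots> \<le> 2 * (1 - ?p $ a)" using sumsq_le1[of \<theta>] by simp
    finally have "(norm (est_grad \<eta> \<theta> a Rv))\<^sup>2 \<le> 2 * Rmax\<^sup>2 * (2 * (1 - ?p $ a)) + 2 * V"
      by (simp add: mult_left_mono)
    then show ?thesis by (simp add: algebra_simps)
  qed
  have "(\<Sum>a\<in>UNIV. ?p $ a * (norm (est_grad \<eta> \<theta> a Rv))\<^sup>2)
      \<le> (\<Sum>a\<in>UNIV. ?p $ a * (4 * Rmax\<^sup>2 * (1 - ?p $ a) + 2 * V))"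
    by (rule sum_mono) (simp add: mult_left_mono each softmax_pos less_imp_le)
  also have "\<dots> = 4 * Rmax\<^sup>2 * (\<Sum>a\<in>UNIV. ?p $ a * (1 - ?p $ a)) + 2 * V"
  proof -
    have "(\<Sum>a\<in>UNIV. ?p $ a * (4 * Rmax\<^sup>2 * (1 - ?p $ a) + 2 * V))
       = (\<Sum>a\<in>UNIV. 4 * Rmax\<^sup>2 * (?p $ a * (1 - ?p $ a)) + 2 * V * ?p $ a)"
      by (rule sum.cong) (auto simp: algebra_simps)
    also have "\<dots> = 4 * Rmax\<^sup>2 * (\<Sum>a\<in>UNIV. ?p $ a * (1 - ?p $ a)) + 2 * V * (\<Sum>a\<in>UNIV. ?p $ a)"
      by (simp only: sum.distrib sum_distrib_left)
    finally show ?thesis by (simp add: softmax_sum)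
  qed
  also have "(\<Sum>a\<in>UNIV. ?p $ a * (1 - ?p $ a)) \<le> (\<Sum>a\<in>UNIV. ?p $ a + (if a = j then 1 - 2 * ?p $ j else 0))"
  proof (rule sum_mono)
    fix a
    show "?p $ a * (1 - ?p $ a) \<le> ?p $ a + (if a = j then 1 - 2 * ?p $ j else 0)"
      using softmax_pos[of \<theta> a] softmax_le1[of \<theta> a] zero_le_power2[of "1 - softmax \<theta> $ a"]
      by (auto simp: algebra_simps mult_nonneg_nonneg power2_eq_square)
  qed
  also have "\<dots> = 2 * (1 - ?p $ j)" by (simp add: sum.distrib softmax_sum)
  finally have "(\<Sum>a\<in>UNIV. ?p $ a * (norm (est_grad \<eta> \<theta> a Rv))\<^sup>2)
      \<le> 4 * Rmax\<^sup>2 * (2 * (1 - ?p $ j)) + 2 * V" by (simp add: mult_left_mono)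
  then show ?thesis using V by (simp add: algebra_simps)
qed

lemma lin_aux: "(a::real) \<le> x \<Longrightarrow> x - y \<le> z \<Longrightarrow> 0 \<le> y \<Longrightarrow> 0 \<le> q \<Longrightarrow> a + 2*q \<le> z + (8*q + 2*y)"
  by linarith

theorem lemma5p1:
  fixes M :: "(real^'k::finite) measure"
    and r \<theta> g :: "real^'k"
    and Rmax \<eta> \<alpha> :: real
  assumes K2: "CARD('k) \<ge> 2"
    and prob: "prob_space M"
    and sets_M: "sets M = sets borel"
    and bounded: "AE Rv in M. \<forall>a. \<bar>Rv $ a\<bar> \<le> Rmax"
    and mean: "\<forall>a. (\<integral>Rv. Rv $ a \<partial>M) = r $ a"
    and distinct: "\<forall>a a'. a \<noteq> a' \<longrightarrow> r $ a \<noteq> r $ a'"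
    and eta: "\<eta> > 0"
    and alpha: "\<alpha> > 0"
    and grad: "(Phi \<eta> r has_derivative (\<lambda>h. g \<bullet> h)) (at \<theta>)"
  shows "(\<integral>Rv. (\<Sum>a\<in>UNIV. softmax \<theta> $ a * (norm (est_grad \<eta> \<theta> a Rv))\<^sup>2) \<partial>M)
         \<le> 16 * Rmax ^ 3 * real CARD('k) powr (3/2) / (gap r)\<^sup>2 * norm g
           + (2 * real CARD('k) / \<eta>) * (4 * real CARD('k) / \<eta>
               + 16 * Rmax ^ 3 * real CARD('k) powr (3/2) / (gap r)\<^sup>2)"
proof -
  interpret prob_space M by (rule prob)
  define K where "K = real CARD('k)"
  define p where "p = softmax \<theta>"
  define D where "D = gap r"
  define rb where "rb = p \<bullet> r"
  define c where "c = 16 * Rmax ^ 3 * K powr (3/2) / D\<^sup>2"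
  define RHS where "RHS = c * norm g + (2 * K / \<eta>) * (4 * K / \<eta> + c)"
  have Kge2: "K \<ge> 2" using K2 unfolding K_def by simp
  have Rnn: "Rmax \<ge> 0"
  proof -
    have "AE Rv in M. 0 \<le> Rmax" using bounded by eventually_elim (auto intro: order_trans)
    then show ?thesis by simp
  qed
  have rbd: "\<bar>r $ a\<bar> \<le> Rmax" for a
  proof (cases "integrable M (\<lambda>Rv. Rv $ a)")
    case True
    have AEa: "AE Rv in M. - Rmax \<le> Rv $ a \<and> Rv $ a \<le> Rmax"
      using bounded by eventually_elim (metis abs_le_D1 abs_le_D2 minus_le_iff)
    have "(\<integral>Rv. Rv $ a \<partial>M) \<le> (\<integral>Rv. Rmax \<partial>M)"
      by (rule integral_mono_AE[OF True]) (use AEa in \<open>auto elim: eventually_mono\<close>)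
    moreover have "(\<integral>Rv. - Rmax \<partial>M) \<le> (\<integral>Rv. Rv $ a \<partial>M)"
      by (rule integral_mono_AE[OF _ True]) (use AEa in \<open>auto elim: eventually_mono\<close>)
    ultimately show ?thesis using mean prob_space by (auto simp: abs_le_iff)
  next
    case False
    then show ?thesis using mean Rnn not_integrable_integral_eq[OF False] by auto
  qed
  obtain a0 a1 :: 'k where a01: "a0 \<noteq> a1"
  proof -
    have "\<not> (\<forall>x y :: 'k. x = y)"
    proof
      assume "\<forall>x y :: 'k. x = y"
      then have "(UNIV :: 'k set) \<subseteq> {undefined}" by auto
      then have "CARD('k) \<le> 1" using card_mono[of "{undefined}" "UNIV :: 'k set"] by simp
      then show False using K2 by simp
    qed
    then show ?thesis using that by blast
  qed
  define G where "G = {\<bar>r $ a - r $ a'\<bar> | a a'. a \<noteq> a'}"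
  have finG: "finite G"
  proof -
    have "G \<subseteq> (\<lambda>(a, a'). \<bar>r $ a - r $ a'\<bar>) ` UNIV" unfolding G_def by auto
    then show ?thesis by (rule finite_subset) simp
  qed
  have GD: "D \<le> \<bar>r $ a - r $ a'\<bar>" if "a \<noteq> a'" for a a'
    unfolding D_def gap_def G_def[symmetric] using finG that by (intro Min_le) (auto simp: G_def)
  have Dpos: "D > 0"
  proof -
    have "D \<in> G" unfolding D_def gap_def G_def[symmetric] using finG a01
      by (intro Min_in) (auto simp: G_def)
    then show ?thesis using distinct unfolding G_def by auto
  qed
  have D2R: "D \<le> 2 * Rmax"
    using GD[OF a01] rbd[of a0] rbd[of a1] by linarith
  have Rpos: "Rmax > 0" using Dpos D2R by linarith
  obtain j where j: "\<And>i. \<bar>r $ j - rb\<bar> \<le> \<bar>r $ i - rb\<bar>"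
  proof -
    let ?f = "\<lambda>i. \<bar>r $ i - rb\<bar>"
    have "Min (range ?f) \<in> range ?f" by (intro Min_in) auto
    then obtain j where "Min (range ?f) = ?f j" by blast
    moreover have "\<And>i. Min (range ?f) \<le> ?f i" by (intro Min_le) auto
    ultimately show ?thesis using that by metis
  qed
  define w where "w = (\<chi> i. p $ i * (r $ i - rb))"
  define v where "v = (\<chi> i. (1/\<eta>) * (1 - K * p $ i))"
  have geq: "g = w + v"
    unfolding vec_eq_iff w_def v_def p_def rb_def K_def
    using grad_formula[OF grad eta] by simp
  have nv: "norm v \<le> K / \<eta>"
  proof -
    have "(norm v)\<^sup>2 \<le> K\<^sup>2 / \<eta>\<^sup>2"
      unfolding power2_norm_eq_inner inner_vec_def v_def K_def p_def
      using vnorm[OF eta, of \<theta>] by (simp add: power2_eq_square)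
    then have "(norm v)\<^sup>2 \<le> (K / \<eta>)\<^sup>2" by (simp add: power_divide)
    moreover have "K / \<eta> \<ge> 0" using eta Kge2 by simp
    ultimately show ?thesis by (rule power2_le_imp_le)
  qed
  have ng: "norm g \<ge> norm w - K / \<eta>"
  proof -
    have "w = g - v" using geq by simp
    then have "norm w \<le> norm g + norm v" using norm_triangle_ineq4[of g v] by simp
    then show ?thesis using nv by linarith
  qed
  have L1: "(\<Sum>i\<in>UNIV. \<bar>w $ i\<bar>) \<ge> (D/2) * (1 - p $ j)"
  proof -
    have "(\<Sum>i\<in>UNIV. (D/2) * (p $ i - (if i = j then p $ j else 0))) \<le> (\<Sum>i\<in>UNIV. \<bar>w $ i\<bar>)"
    proof (rule sum_mono)
      fix i
      show "(D/2) * (p $ i - (if i = j then p $ j else 0)) \<le> \<bar>w $ i\<bar>"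
      proof (cases "i = j")
        case True then show ?thesis by simp
      next
        case False
        have "D \<le> \<bar>r $ i - r $ j\<bar>" using GD False by simp
        also have "\<dots> \<le> \<bar>r $ i - rb\<bar> + \<bar>r $ j - rb\<bar>" by linarith
        also have "\<dots> \<le> 2 * \<bar>r $ i - rb\<bar>" 
        proof -
          have "\<bar>r $ j - rb\<bar> \<le> \<bar>r $ i - rb\<bar>" by (rule j)
          then have "\<bar>r $ i - rb\<bar> + \<bar>r $ j - rb\<bar> \<le> \<bar>r $ i - rb\<bar> + \<bar>r $ i - rb\<bar>"
            by (rule add_left_mono)
          then show ?thesis by (simp only: mult_2)
        qed
        finally have "D/2 \<le> \<bar>r $ i - rb\<bar>" by simp
        then have "p $ i * (D/2) \<le> p $ i * \<bar>r $ i - rb\<bar>"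
          by (intro mult_left_mono) (auto simp: p_def softmax_pos less_imp_le)
        then show ?thesis using False softmax_pos[of \<theta> i]
          by (simp add: w_def abs_mult p_def mult.commute)
      qed
    qed
    moreover have "(\<Sum>i\<in>UNIV. (D/2) * (p $ i - (if i = j then p $ j else 0))) = (D/2) * (1 - p $ j)"
    proof -
      have "(\<Sum>i\<in>UNIV. (D/2) * (p $ i - (if i = j then p $ j else 0)))
          = (D/2) * ((\<Sum>i\<in>UNIV. p $ i) - (\<Sum>i\<in>UNIV. (if i = j then p $ j else 0)))"
        by (simp only: sum_distrib_left[symmetric] sum_subtractf)
      also have "\<dots> = (D/2) * (1 - p $ j)" by (simp add: p_def softmax_sum)
      finally show ?thesis .
    qed
    ultimately show ?thesis by simp
  qed
  have CS: "(\<Sum>i\<in>UNIV. \<bar>w $ i\<bar>) \<le> sqrt K * norm w"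
  proof -
    have "(\<Sum>i\<in>UNIV. \<bar>w $ i\<bar> * 1)\<^sup>2 \<le> (\<Sum>i\<in>UNIV. \<bar>w $ i\<bar>\<^sup>2) * (\<Sum>i\<in>(UNIV::'k set). (1::real)\<^sup>2)"
      using Cauchy_Schwarz_ineq_sum[of "\<lambda>i. \<bar>w $ i\<bar>" "\<lambda>i. 1" UNIV] by simp
    also have "\<dots> = (norm w)\<^sup>2 * K"
      unfolding power2_norm_eq_inner inner_vec_def K_def by (simp add: power2_eq_square)
    finally have "(\<Sum>i\<in>UNIV. \<bar>w $ i\<bar>)\<^sup>2 \<le> (sqrt K * norm w)\<^sup>2"
      using Kge2 by (simp add: power_mult_distrib mult.commute)
    moreover have "sqrt K * norm w \<ge> 0" using Kge2 by simp
    ultimately show ?thesis by (rule power2_le_imp_le)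
  qed
  have Kp: "K powr (3/2) = K * sqrt K"
  proof -
    have "K powr (3/2) = K powr (1 + 1/2)" by simp
    also have "\<dots> = K powr 1 * K powr (1/2)" using Kge2 by (subst powr_add) auto
    finally show ?thesis using Kge2 by (simp add: powr_half_sqrt)
  qed
  have sK: "sqrt K > 0" using Kge2 by simp
  have cnn: "c \<ge> 0" unfolding c_def using Rnn Kge2 by auto
  have cw: "c * norm w \<ge> 8 * Rmax\<^sup>2 * (1 - p $ j)"
  proof -
    have pj: "1 - p $ j \<ge> 0" using softmax_le1[of \<theta> j] by (simp add: p_def)
    have nw: "norm w \<ge> (D/2) * (1 - p $ j) / sqrt K"
      using L1 CS sK by (simp add: field_simps)
    have "c * ((D/2) * (1 - p $ j) / sqrt K) = 8 * Rmax ^ 3 * K / D * (1 - p $ j)"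
      unfolding c_def Kp using sK Dpos by (simp add: field_simps power2_eq_square)
    also have "8 * Rmax ^ 3 * K / D \<ge> 8 * Rmax\<^sup>2"
    proof -
      have "D \<le> Rmax * K" 
      proof -
        have "Rmax * 2 \<le> Rmax * K" by (rule mult_left_mono[OF Kge2 Rnn])
        then show ?thesis using D2R by simp
      qed
      then have "8 * Rmax\<^sup>2 * D \<le> 8 * Rmax\<^sup>2 * (Rmax * K)" using Rpos by (intro mult_left_mono) auto
      then show ?thesis using Dpos by (simp add: field_simps power2_eq_square power3_eq_cube)
    qed
    then have "8 * Rmax ^ 3 * K / D * (1 - p $ j) \<ge> 8 * Rmax\<^sup>2 * (1 - p $ j)"
      using pj by (intro mult_right_mono) auto
    finally have "c * ((D/2) * (1 - p $ j) / sqrt K) \<ge> 8 * Rmax\<^sup>2 * (1 - p $ j)" .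
    moreover have "c * norm w \<ge> c * ((D/2) * (1 - p $ j) / sqrt K)"
      using nw cnn by (intro mult_left_mono) auto
    ultimately show ?thesis by linarith
  qed
  define B where "B = 8 * Rmax\<^sup>2 * (1 - p $ j) + 2 * K\<^sup>2 / \<eta>\<^sup>2"
  have BR: "B \<le> RHS"
  proof -
    have f1: "c * norm g \<ge> c * norm w - c * (K / \<eta>)"
    proof -
      have "c * norm g \<ge> c * (norm w - K / \<eta>)" using ng cnn by (intro mult_left_mono) auto
      then show ?thesis by (simp add: right_diff_distrib)
    qed
    have f2: "(2 * K / \<eta>) * (4 * K / \<eta> + c) = 8 * (K\<^sup>2 / \<eta>\<^sup>2) + 2 * (c * (K / \<eta>))"
      using eta by (simp add: field_simps power2_eq_square)
    have f3: "c * (K / \<eta>) \<ge> 0" using cnn eta Kge2 by simp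
    have f4: "K\<^sup>2 / \<eta>\<^sup>2 \<ge> 0" by simp
    have f5: "2 * K\<^sup>2 / \<eta>\<^sup>2 = 2 * (K\<^sup>2 / \<eta>\<^sup>2)" by simp
    show ?thesis unfolding RHS_def B_def f2 f5 by (rule lin_aux[OF cw f1 f3 f4])
  qed
  have Bnn: "B \<ge> 0" unfolding B_def using softmax_le1[of \<theta> j] by (simp add: p_def)
  let ?h = "\<lambda>Rv. (\<Sum>a\<in>UNIV. softmax \<theta> $ a * (norm (est_grad \<eta> \<theta> a Rv))\<^sup>2)"
  have AEh: "AE Rv in M. ?h Rv \<le> RHS"
    using bounded
  proof eventually_elim
    case (elim Rv)
    have "?h Rv \<le> B" unfolding B_def K_def p_def by (rule est_bound[OF elim eta])
    then show ?case using BR by simp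
  qed
  show ?thesis
  proof (cases "integrable M ?h")
    case True
    have "integral\<^sup>L M ?h \<le> integral\<^sup>L M (\<lambda>_. RHS)"
      by (rule integral_mono_AE[OF True _ AEh]) simp
    then show ?thesis using prob_space unfolding RHS_def c_def K_def D_def by simp
  next
    case False
    then show ?thesis using Bnn BR not_integrable_integral_eq[OF False]
      unfolding RHS_def c_def K_def D_def by simp
  qed
qed

end
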